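(* Let $A$ be a category with a variance $(E,M)$, let $C$ be a category, let $F\colon A\rightarrow C$ be a functor of variance $(E,M)$, and let $(R,L)$ be a span on $A$. Assume that the products $\prod_{x} F(Lx)$ (over the objects $x$ of $R$) and $\prod_{f} F(L(f)_t)$ (over the morphisms $f$ of $R$) exist in $C$. Let $s,t\colon \prod_x F(Lx)\rightarrow \prod_f F(L(f)_t)$ be the unique morphisms such that for every morphism $f\colon x\rightarrow y$ of $R$, $$\pi_f\circ s = F(L(f)^e)\circ \pi_x,\qquad \pi_f\circ t = F(L(f)^m)\circ\pi_y .$$ Then the assignment sending an $L$-wedge $(c,(\eta_x)_x)$ to $(c,\eta')$, where $\eta'\colon c\rightarrow \prod_x F(Lx)$ is the morphism with components $\eta_x$ (and acting as the identity on underlying morphisms), is an isomorphism between the category of $L$-wedges of $F$ and the category of cones equalizing $s$ and $t$ (pairs $(c,e\colon c\rightarrow\prod_xF(Lx))$ with $se=te$, morphisms being morphisms $c\rightarrow d$ in $C$ commuting with the maps $e$). In particular, the end $\int_L F$ exists if and only if the equalizer of $s$ and $t$ exists, and in that case they agree.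
   Context: A variance on a category $A$ is a pair $(E,M)$ of subcategories containing all objects such that every morphism $f$ factors uniquely as $f=me$ and uniquely as $f=e'm'$ with $e,e'$ in $E$ and $m,m'$ in $M$. For $f\colon x\rightarrow y$ write $f=f^mf^e$ with $f^e\colon x\rightarrow f_t$ in $E$, $f^m\colon f_t\rightarrow y$ in $M$, and $f=f_ef_m$ with $f_m\colon x\rightarrow f_s$ in $M$, $f_e\colon f_s\rightarrow y$ in $E$. A functor $F\colon A\rightarrow C$ of variance $(E,M)$ assigns objects to objects and to each morphism $f$ of $A$ a morphism $F(f)\colon F(f_s)\rightarrow F(f_t)$, preserving identities and satisfying, for composable $x\xrightarrow{f}y\xrightarrow{g}z$, $F(gf)=F((g^ef^m)^e)F(f)F((g_mf_e)_m)=F((g^ef^m)^m)F(g)F((g_mf_e)_e)$. (Thus for $f\colon x\rightarrow y$ in $R$, $F(L(f)^e)\colon F(Lx)\rightarrow F(L(f)_t)$ and $F(L(f)^m)\colon F(Ly)\rightarrow F(L(f)_t)$.) A span on $A$ is a pair $(R,L)$ of a category $R$ and a functor $L\colon R\rightarrow A$. An $L$-wedge of $F$ is a pair $(c,\eta)$ where $c$ is an object of $C$ and $\eta=(\eta_x\colon c\rightarrow F(Lx))_{x\in R}$ is a family such that $F(L(f)^e)\circ\eta_x = F(L(f)^m)\circ\eta_y$ for every morphism $f\colon x\rightarrow y$ of $R$. A morphism of $L$-wedges $(c,\eta)\rightarrow(d,\theta)$ is a morphism $h\colon c\rightarrow d$ with $\theta_x\circ h=\eta_x$ for all objects $x$ of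 $R$; composition is that of $C$. The end $\int_L F$ of $F$ over $L$ is a terminal $L$-wedge. *)

theory Defs
  imports "HOL-Library.FuncSet"
begin

record ('o, 'm) cat =
  cObj  :: "'o set"
  cArr  :: "'m set"
  cDom  :: "'m \<Rightarrow> 'o"
  cCod  :: "'m \<Rightarrow> 'o"
  cId   :: "'o \<Rightarrow> 'm"
  cComp :: "'m \<Rightarrow> 'm \<Rightarrow> 'm"   (* cComp C g f = g o f *)

definition hom :: "('o,'m) cat \<Rightarrow> 'o \<Rightarrow> 'o \<Rightarrow> 'm set" where
  "hom C x y = {f \<in> cArr C. cDom C f = x \<and> cCod C f = y}"

definition category :: "('o,'m) cat \<Rightarrow> bool" where
  "category C \<longleftrightarrow>
     (\<forall>f\<in>cArr C. cDom C f \<in> cObj C \<and> cCod C f \<in> cObj C) \<and>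
     (\<forall>x\<in>cObj C. cId C x \<in> hom C x x) \<and>
     (\<forall>f\<in>cArr C. \<forall>g\<in>cArr C. cCod C f = cDom C g \<longrightarrow>
        cComp C g f \<in> hom C (cDom C f) (cCod C g)) \<and>
     (\<forall>f\<in>cArr C. cComp C f (cId C (cDom C f)) = f \<and> cComp C (cId C (cCod C f)) f = f) \<and>
     (\<forall>f\<in>cArr C. \<forall>g\<in>cArr C. \<forall>h\<in>cArr C. cCod C f = cDom C g \<longrightarrow> cCod C g = cDom C h \<longrightarrow>
        cComp C h (cComp C g f) = cComp C (cComp C h g) f)"

definition cfunctor :: "('a,'f) cat \<Rightarrow> ('b,'g) cat \<Rightarrow> ('a \<Rightarrow> 'b) \<Rightarrow> ('f \<Rightarrow> 'g) \<Rightarrow> bool" where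
  "cfunctor A B FO FM \<longleftrightarrow> category A \<and> category B \<and>
     (\<forall>x\<in>cObj A. FO x \<in> cObj B) \<and>
     (\<forall>f\<in>cArr A. FM f \<in> hom B (FO (cDom A f)) (FO (cCod A f))) \<and>
     (\<forall>x\<in>cObj A. FM (cId A x) = cId B (FO x)) \<and>
     (\<forall>f\<in>cArr A. \<forall>g\<in>cArr A. cCod A f = cDom A g \<longrightarrow>
        FM (cComp A g f) = cComp B (FM g) (FM f))"

definition iso_functor :: "('a,'f) cat \<Rightarrow> ('b,'g) cat \<Rightarrow> ('a \<Rightarrow> 'b) \<Rightarrow> ('f \<Rightarrow> 'g) \<Rightarrow> bool" where
  "iso_functor A B FO FM \<longleftrightarrow> cfunctor A B FO FM \<and>
     bij_betw FO (cObj A) (cObj B) \<and> bij_betw FM (cArr A) (cArr B)"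

definition subcat_all_obj :: "('o,'m) cat \<Rightarrow> 'm set \<Rightarrow> bool" where
  "subcat_all_obj A S \<longleftrightarrow> S \<subseteq> cArr A \<and> (\<forall>x\<in>cObj A. cId A x \<in> S) \<and>
     (\<forall>f\<in>S. \<forall>g\<in>S. cCod A f = cDom A g \<longrightarrow> cComp A g f \<in> S)"

definition is_em :: "('o,'m) cat \<Rightarrow> 'm set \<Rightarrow> 'm set \<Rightarrow> 'm \<Rightarrow> 'm \<times> 'm \<Rightarrow> bool" where
  "is_em A E M f p \<longleftrightarrow> fst p \<in> E \<and> snd p \<in> M \<and> cDom A (fst p) = cDom A f \<and>
     cCod A (fst p) = cDom A (snd p) \<and> cCod A (snd p) = cCod A f \<and> cComp A (snd p) (fst p) = f"

definition is_me :: "('o,'m) cat \<Rightarrow> 'm set \<Rightarrow> 'm set \<Rightarrow> 'm \<Rightarrow> 'm \<times> 'm \<Rightarrow> bool" where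
  "is_me A E M f p \<longleftrightarrow> fst p \<in> M \<and> snd p \<in> E \<and> cDom A (fst p) = cDom A f \<and>
     cCod A (fst p) = cDom A (snd p) \<and> cCod A (snd p) = cCod A f \<and> cComp A (snd p) (fst p) = f"

definition variance :: "('o,'m) cat \<Rightarrow> 'm set \<Rightarrow> 'm set \<Rightarrow> bool" where
  "variance A E M \<longleftrightarrow> category A \<and> subcat_all_obj A E \<and> subcat_all_obj A M \<and>
     (\<forall>f\<in>cArr A. \<exists>!p. is_em A E M f p) \<and> (\<forall>f\<in>cArr A. \<exists>!p. is_me A E M f p)"

text \<open>f = f^m f^e, f^e : x -> f_t; f = f_e f_m, f_m : x -> f_s.\<close>
definition up_e :: "('o,'m) cat \<Rightarrow> 'm set \<Rightarrow> 'm set \<Rightarrow> 'm \<Rightarrow> 'm" where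
  "up_e A E M f = fst (THE p. is_em A E M f p)"
definition up_m :: "('o,'m) cat \<Rightarrow> 'm set \<Rightarrow> 'm set \<Rightarrow> 'm \<Rightarrow> 'm" where
  "up_m A E M f = snd (THE p. is_em A E M f p)"
definition tgt :: "('o,'m) cat \<Rightarrow> 'm set \<Rightarrow> 'm set \<Rightarrow> 'm \<Rightarrow> 'o" where
  "tgt A E M f = cCod A (up_e A E M f)"
definition lo_m :: "('o,'m) cat \<Rightarrow> 'm set \<Rightarrow> 'm set \<Rightarrow> 'm \<Rightarrow> 'm" where
  "lo_m A E M f = fst (THE p. is_me A E M f p)"
definition lo_e :: "('o,'m) cat \<Rightarrow> 'm set \<Rightarrow> 'm set \<Rightarrow> 'm \<Rightarrow> 'm" where
  "lo_e A E M f = snd (THE p. is_me A E M f p)"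
definition src :: "('o,'m) cat \<Rightarrow> 'm set \<Rightarrow> 'm set \<Rightarrow> 'm \<Rightarrow> 'o" where
  "src A E M f = cCod A (lo_m A E M f)"

definition var_functor ::
  "('a,'f) cat \<Rightarrow> 'f set \<Rightarrow> 'f set \<Rightarrow> ('c,'g) cat \<Rightarrow> ('a \<Rightarrow> 'c) \<Rightarrow> ('f \<Rightarrow> 'g) \<Rightarrow> bool" where
  "var_functor A E M C FO FM \<longleftrightarrow> variance A E M \<and> category C \<and>
     (\<forall>x\<in>cObj A. FO x \<in> cObj C) \<and>
     (\<forall>f\<in>cArr A. FM f \<in> hom C (FO (src A E M f)) (FO (tgt A E M f))) \<and>
     (\<forall>x\<in>cObj A. FM (cId A x) = cId C (FO x)) \<and>
     (\<forall>f\<in>cArr A. \<forall>g\<in>cArr A. cCod A f = cDom A g \<longrightarrow>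
        FM (cComp A g f) =
          cComp C (FM (up_e A E M (cComp A (up_e A E M g) (up_m A E M f))))
            (cComp C (FM f) (FM (lo_m A E M (cComp A (lo_m A E M g) (lo_e A E M f))))) \<and>
        FM (cComp A g f) =
          cComp C (FM (up_m A E M (cComp A (up_e A E M g) (up_m A E M f))))
            (cComp C (FM g) (FM (lo_e A E M (cComp A (lo_m A E M g) (lo_e A E M f))))))"

definition is_wedge ::
  "('a,'f) cat \<Rightarrow> 'f set \<Rightarrow> 'f set \<Rightarrow> ('c,'g) cat \<Rightarrow> ('a \<Rightarrow> 'c) \<Rightarrow> ('f \<Rightarrow> 'g) \<Rightarrow>
   ('r,'h) cat \<Rightarrow> ('r \<Rightarrow> 'a) \<Rightarrow> ('h \<Rightarrow> 'f) \<Rightarrow> 'c \<Rightarrow> ('r \<Rightarrow> 'g) \<Rightarrow> bool" where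
  "is_wedge A E M C FO FM R LO LM c \<eta> \<longleftrightarrow> c \<in> cObj C \<and>
     (\<forall>x\<in>cObj R. \<eta> x \<in> hom C c (FO (LO x))) \<and>
     (\<forall>f\<in>cArr R. cComp C (FM (up_e A E M (LM f))) (\<eta> (cDom R f)) =
                  cComp C (FM (up_m A E M (LM f))) (\<eta> (cCod R f)))"

definition is_end ::
  "('a,'f) cat \<Rightarrow> 'f set \<Rightarrow> 'f set \<Rightarrow> ('c,'g) cat \<Rightarrow> ('a \<Rightarrow> 'c) \<Rightarrow> ('f \<Rightarrow> 'g) \<Rightarrow>
   ('r,'h) cat \<Rightarrow> ('r \<Rightarrow> 'a) \<Rightarrow> ('h \<Rightarrow> 'f) \<Rightarrow> 'c \<Rightarrow> ('r \<Rightarrow> 'g) \<Rightarrow> bool" where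
  "is_end A E M C FO FM R LO LM c \<eta> \<longleftrightarrow> is_wedge A E M C FO FM R LO LM c \<eta> \<and>
     (\<forall>d \<theta>. is_wedge A E M C FO FM R LO LM d \<theta> \<longrightarrow>
        (\<exists>!h. h \<in> hom C d c \<and> (\<forall>x\<in>cObj R. cComp C (\<eta> x) h = \<theta> x)))"

text \<open>The category of L-wedges; families are indexed by the objects of R
  (represented as extensional functions on cObj R). Arrows are triples (source, target, h).\<close>
definition wedge_cat ::
  "('a,'f) cat \<Rightarrow> 'f set \<Rightarrow> 'f set \<Rightarrow> ('c,'g) cat \<Rightarrow> ('a \<Rightarrow> 'c) \<Rightarrow> ('f \<Rightarrow> 'g) \<Rightarrow>
   ('r,'h) cat \<Rightarrow> ('r \<Rightarrow> 'a) \<Rightarrow> ('h \<Rightarrow> 'f) \<Rightarrow>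
   ('c \<times> ('r \<Rightarrow> 'g), ('c \<times> ('r \<Rightarrow> 'g)) \<times> ('c \<times> ('r \<Rightarrow> 'g)) \<times> 'g) cat" where
  "wedge_cat A E M C FO FM R LO LM =
     (let W = {w. is_wedge A E M C FO FM R LO LM (fst w) (snd w) \<and> snd w \<in> extensional (cObj R)} in
     \<lparr> cObj = W,
       cArr = {(u, v, h). u \<in> W \<and> v \<in> W \<and> h \<in> hom C (fst u) (fst v) \<and>
                          (\<forall>x\<in>cObj R. cComp C (snd v x) h = snd u x)},
       cDom = (\<lambda>(u, v, h). u),
       cCod = (\<lambda>(u, v, h). v),
       cId = (\<lambda>u. (u, u, cId C (fst u))),
       cComp = (\<lambda>(v', w, k) (u, v, h). (u, w, cComp C k h)) \<rparr>)"

definition is_product :: "('c,'g) cat \<Rightarrow> 'i set \<Rightarrow> 'c \<Rightarrow> ('i \<Rightarrow> 'g) \<Rightarrow> ('i \<Rightarrow> 'c) \<Rightarrow> bool" where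
  "is_product C I P \<pi> X \<longleftrightarrow> P \<in> cObj C \<and> (\<forall>i\<in>I. \<pi> i \<in> hom C P (X i)) \<and>
     (\<forall>d\<in>cObj C. \<forall>\<phi>. (\<forall>i\<in>I. \<phi> i \<in> hom C d (X i)) \<longrightarrow>
        (\<exists>!h. h \<in> hom C d P \<and> (\<forall>i\<in>I. cComp C (\<pi> i) h = \<phi> i)))"

definition tuple :: "('c,'g) cat \<Rightarrow> 'i set \<Rightarrow> 'c \<Rightarrow> ('i \<Rightarrow> 'g) \<Rightarrow> 'c \<Rightarrow> ('i \<Rightarrow> 'g) \<Rightarrow> 'g" where
  "tuple C I P \<pi> d \<phi> = (THE h. h \<in> hom C d P \<and> (\<forall>i\<in>I. cComp C (\<pi> i) h = \<phi> i))"

definition cone_cat :: "('c,'g) cat \<Rightarrow> 'c \<Rightarrow> 'g \<Rightarrow> 'g \<Rightarrow> ('c \<times> 'g, ('c \<times> 'g) \<times> ('c \<times> 'g) \<times> 'g) cat" where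
  "cone_cat C P s t =
     (let K = {u. fst u \<in> cObj C \<and> snd u \<in> hom C (fst u) P \<and> cComp C s (snd u) = cComp C t (snd u)} in
     \<lparr> cObj = K,
       cArr = {(u, v, h). u \<in> K \<and> v \<in> K \<and> h \<in> hom C (fst u) (fst v) \<and> cComp C (snd v) h = snd u},
       cDom = (\<lambda>(u, v, h). u),
       cCod = (\<lambda>(u, v, h). v),
       cId = (\<lambda>u. (u, u, cId C (fst u))),
       cComp = (\<lambda>(v', w, k) (u, v, h). (u, w, cComp C k h)) \<rparr>)"

definition is_equalizer :: "('c,'g) cat \<Rightarrow> 'c \<Rightarrow> 'g \<Rightarrow> 'g \<Rightarrow> 'c \<Rightarrow> 'g \<Rightarrow> bool" where
  "is_equalizer C P s t c e \<longleftrightarrow> c \<in> cObj C \<and> e \<in> hom C c P \<and> cComp C s e = cComp C t e \<and>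
     (\<forall>d e'. d \<in> cObj C \<and> e' \<in> hom C d P \<and> cComp C s e' = cComp C t e' \<longrightarrow>
        (\<exists>!h. h \<in> hom C d c \<and> cComp C e h = e'))"

end

theory Submission
  imports Defs
begin

lemma cat_comp_hom: "category C \<Longrightarrow> f \<in> hom C a b \<Longrightarrow> g \<in> hom C b c \<Longrightarrow> cComp C g f \<in> hom C a c"
  by (auto simp: category_def hom_def)
lemma cat_assoc: "category C \<Longrightarrow> f \<in> hom C a b \<Longrightarrow> g \<in> hom C b c \<Longrightarrow> h \<in> hom C c d \<Longrightarrow>
   cComp C h (cComp C g f) = cComp C (cComp C h g) f"
  by (auto simp: category_def hom_def)
lemma cat_id_hom: "category C \<Longrightarrow> x \<in> cObj C \<Longrightarrow> cId C x \<in> hom C x x"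
  by (auto simp: category_def)
lemma cat_id_l: "category C \<Longrightarrow> f \<in> hom C a b \<Longrightarrow> cComp C (cId C b) f = f"
  by (auto simp: category_def hom_def)
lemma cat_id_r: "category C \<Longrightarrow> f \<in> hom C a b \<Longrightarrow> cComp C f (cId C a) = f"
  by (auto simp: category_def hom_def)
lemma hom_obj: "category C \<Longrightarrow> f \<in> hom C a b \<Longrightarrow> a \<in> cObj C \<and> b \<in> cObj C"
  by (auto simp: category_def hom_def)

lemma prod_univ:
  assumes "is_product C I P \<pi> X" "d \<in> cObj C" "\<forall>i\<in>I. \<phi> i \<in> hom C d (X i)"
  shows "\<exists>!h. h \<in> hom C d P \<and> (\<forall>i\<in>I. cComp C (\<pi> i) h = \<phi> i)"
proof -
  have u: "\<forall>d\<in>cObj C. \<forall>\<phi>. (\<forall>i\<in>I. \<phi> i \<in> hom C d (X i)) \<longrightarrow>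
        (\<exists>!h. h \<in> hom C d P \<and> (\<forall>i\<in>I. cComp C (\<pi> i) h = \<phi> i))"
    using assms(1) unfolding is_product_def by (elim conjE)
  show ?thesis using mp[OF spec[OF bspec[OF u assms(2)], of \<phi>] assms(3)] .
qed

lemma prod_unique:
  assumes "category C" "is_product C I P \<pi> X" "h \<in> hom C d P" "h' \<in> hom C d P"
    "\<forall>i\<in>I. cComp C (\<pi> i) h = cComp C (\<pi> i) h'"
  shows "h = h'"
proof -
  have d: "d \<in> cObj C" using hom_obj[OF assms(1,3)] by blast
  have pi: "\<forall>i\<in>I. \<pi> i \<in> hom C P (X i)" using assms(2) unfolding is_product_def by (elim conjE)
  have "\<forall>i\<in>I. cComp C (\<pi> i) h \<in> hom C d (X i)"
    using pi assms(3) cat_comp_hom[OF assms(1)] by blast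
  from prod_univ[OF assms(2) d this] obtain k where
    k: "\<And>k'. k' \<in> hom C d P \<and> (\<forall>i\<in>I. cComp C (\<pi> i) k' = cComp C (\<pi> i) h) \<Longrightarrow> k' = k"
    by (metis (no_types, lifting))
  have "h = k" by (rule k) (use assms(3) in simp)
  moreover have "h' = k" by (rule k) (use assms(4,5) in simp)
  ultimately show ?thesis by simp
qed

lemma tuple_prop:
  assumes "is_product C I P \<pi> X" "d \<in> cObj C" "\<forall>i\<in>I. \<phi> i \<in> hom C d (X i)"
  shows "tuple C I P \<pi> d \<phi> \<in> hom C d P \<and> (\<forall>i\<in>I. cComp C (\<pi> i) (tuple C I P \<pi> d \<phi>) = \<phi> i)"
  unfolding tuple_def by (rule theI'[OF prod_univ[OF assms]])

lemma tuple_eq: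
  assumes "is_product C I P \<pi> X" "d \<in> cObj C" "\<forall>i\<in>I. \<phi> i \<in> hom C d (X i)"
    "h \<in> hom C d P" "\<forall>i\<in>I. cComp C (\<pi> i) h = \<phi> i"
  shows "tuple C I P \<pi> d \<phi> = h"
  unfolding tuple_def by (rule the1_equality[OF prod_univ[OF assms(1-3)]]) (use assms(4,5) in simp)

lemma var_em: "variance A E M \<Longrightarrow> g \<in> cArr A \<Longrightarrow> is_em A E M g (up_e A E M g, up_m A E M g)"
proof -
  assume a: "variance A E M" "g \<in> cArr A"
  then have "\<exists>!p. is_em A E M g p" by (auto simp: variance_def)
  then have "is_em A E M g (THE p. is_em A E M g p)" by (rule theI')
  then show ?thesis by (simp add: up_e_def up_m_def)
qed

lemma var_me: "variance A E M \<Longrightarrow> g \<in> cArr A \<Longrightarrow> is_me A E M g (lo_m A E M g, lo_e A E M g)"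
proof -
  assume a: "variance A E M" "g \<in> cArr A"
  then have "\<exists>!p. is_me A E M g p" by (auto simp: variance_def)
  then have "is_me A E M g (THE p. is_me A E M g p)" by (rule theI')
  then show ?thesis by (simp add: lo_m_def lo_e_def)
qed

lemma var_facts:
  assumes "variance A E M"
  shows "category A" "E \<subseteq> cArr A" "M \<subseteq> cArr A" "\<And>x. x \<in> cObj A \<Longrightarrow> cId A x \<in> E"
    "\<And>x. x \<in> cObj A \<Longrightarrow> cId A x \<in> M"
  using assms by (auto simp: variance_def subcat_all_obj_def)

lemma E_src: assumes "variance A E M" "e \<in> E" shows "src A E M e = cDom A e"
proof -
  note vf = var_facts[OF assms(1)]
  have ea: "e \<in> cArr A" using vf assms by blast
  have ex: "\<exists>!p. is_me A E M e p" using assms ea by (auto simp: variance_def)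
  have o: "cDom A e \<in> cObj A" using vf(1) ea by (auto simp: category_def)
  have "is_me A E M e (cId A (cDom A e), e)"
    using vf(5)[OF o] assms(2) cat_id_hom[OF vf(1) o] cat_id_r[OF vf(1), of e "cDom A e" "cCod A e"] ea
    by (auto simp: is_me_def hom_def)
  then have "(THE p. is_me A E M e p) = (cId A (cDom A e), e)" by (rule the1_equality[OF ex])
  then show ?thesis using cat_id_hom[OF vf(1) o] by (simp add: src_def lo_m_def hom_def)
qed

lemma E_tgt: assumes "variance A E M" "e \<in> E" shows "tgt A E M e = cCod A e"
proof -
  note vf = var_facts[OF assms(1)]
  have ea: "e \<in> cArr A" using vf assms by blast
  have ex: "\<exists>!p. is_em A E M e p" using assms ea by (auto simp: variance_def)
  have o: "cCod A e \<in> cObj A" using vf(1) ea by (auto simp: category_def)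
  have "is_em A E M e (e, cId A (cCod A e))"
    using vf(5)[OF o] assms(2) cat_id_hom[OF vf(1) o] cat_id_l[OF vf(1), of e "cDom A e" "cCod A e"] ea
    by (auto simp: is_em_def hom_def)
  then have "(THE p. is_em A E M e p) = (e, cId A (cCod A e))" by (rule the1_equality[OF ex])
  then show ?thesis by (simp add: tgt_def up_e_def)
qed

lemma M_src: assumes "variance A E M" "m \<in> M" shows "src A E M m = cCod A m"
proof -
  note vf = var_facts[OF assms(1)]
  have ea: "m \<in> cArr A" using vf assms by blast
  have ex: "\<exists>!p. is_me A E M m p" using assms ea by (auto simp: variance_def)
  have o: "cCod A m \<in> cObj A" using vf(1) ea by (auto simp: category_def)
  have "is_me A E M m (m, cId A (cCod A m))"
    using vf(4)[OF o] assms(2) cat_id_hom[OF vf(1) o] cat_id_l[OF vf(1), of m "cDom A m" "cCod A m"] ea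
    by (auto simp: is_me_def hom_def)
  then have "(THE p. is_me A E M m p) = (m, cId A (cCod A m))" by (rule the1_equality[OF ex])
  then show ?thesis by (simp add: src_def lo_m_def)
qed

lemma M_tgt: assumes "variance A E M" "m \<in> M" shows "tgt A E M m = cDom A m"
proof -
  note vf = var_facts[OF assms(1)]
  have ea: "m \<in> cArr A" using vf assms by blast
  have ex: "\<exists>!p. is_em A E M m p" using assms ea by (auto simp: variance_def)
  have o: "cDom A m \<in> cObj A" using vf(1) ea by (auto simp: category_def)
  have "is_em A E M m (cId A (cDom A m), m)"
    using vf(4)[OF o] assms(2) cat_id_hom[OF vf(1) o] cat_id_r[OF vf(1), of m "cDom A m" "cCod A m"] ea
    by (auto simp: is_em_def hom_def)
  then have "(THE p. is_em A E M m p) = (cId A (cDom A m), m)" by (rule the1_equality[OF ex])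
  then show ?thesis using cat_id_hom[OF vf(1) o] by (simp add: tgt_def up_e_def hom_def)
qed

lemma FM_up_e:
  assumes "var_functor A E M C FO FM" "g \<in> cArr A"
  shows "FM (up_e A E M g) \<in> hom C (FO (cDom A g)) (FO (tgt A E M g))"
proof -
  have v: "variance A E M" using assms by (simp add: var_functor_def)
  note em = var_em[OF v assms(2)]
  have ue: "up_e A E M g \<in> E" "up_e A E M g \<in> cArr A" using em var_facts[OF v] by (auto simp: is_em_def)
  have "FM (up_e A E M g) \<in> hom C (FO (src A E M (up_e A E M g))) (FO (tgt A E M (up_e A E M g)))"
    using assms(1) ue by (simp add: var_functor_def)
  then show ?thesis using E_src[OF v ue(1)] E_tgt[OF v ue(1)] em by (simp add: is_em_def tgt_def)
qed

lemma FM_up_m: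
  assumes "var_functor A E M C FO FM" "g \<in> cArr A"
  shows "FM (up_m A E M g) \<in> hom C (FO (cCod A g)) (FO (tgt A E M g))"
proof -
  have v: "variance A E M" using assms by (simp add: var_functor_def)
  note em = var_em[OF v assms(2)]
  have ue: "up_m A E M g \<in> M" "up_m A E M g \<in> cArr A" using em var_facts[OF v] by (auto simp: is_em_def)
  have "FM (up_m A E M g) \<in> hom C (FO (src A E M (up_m A E M g))) (FO (tgt A E M (up_m A E M g)))"
    using assms(1) ue by (simp add: var_functor_def)
  then show ?thesis using M_src[OF v ue(1)] M_tgt[OF v ue(1)] em by (simp add: is_em_def tgt_def)
qed

locale mt =
  fixes A :: "('a, 'f) cat" and E M :: "'f set"
    and C :: "('c, 'g) cat" and FO :: "'a \<Rightarrow> 'c" and FM :: "'f \<Rightarrow> 'g"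
    and R :: "('r, 'h) cat" and LO :: "'r \<Rightarrow> 'a" and LM :: "'h \<Rightarrow> 'f"
    and P Q :: 'c and \<pi> :: "'r \<Rightarrow> 'g" and \<rho> :: "'h \<Rightarrow> 'g" and s t :: 'g
  assumes F: "var_functor A E M C FO FM"
    and L: "cfunctor R A LO LM"
    and prodP: "is_product C (cObj R) P \<pi> (\<lambda>x. FO (LO x))"
    and prodQ: "is_product C (cArr R) Q \<rho> (\<lambda>f. FO (tgt A E M (LM f)))"
    and s: "s \<in> hom C P Q" and t: "t \<in> hom C P Q"
    and s_comp: "\<forall>f\<in>cArr R. cComp C (\<rho> f) s = cComp C (FM (up_e A E M (LM f))) (\<pi> (cDom R f))"
    and t_comp: "\<forall>f\<in>cArr R. cComp C (\<rho> f) t = cComp C (FM (up_m A E M (LM f))) (\<pi> (cCod R f))"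
begin

lemma catC: "category C" using F by (simp add: var_functor_def)
lemma catR: "category R" using L by (simp add: cfunctor_def)

lemma LM_hom: "f \<in> cArr R \<Longrightarrow> LM f \<in> hom A (LO (cDom R f)) (LO (cCod R f))"
  using L by (simp add: cfunctor_def)
lemma LM_arr: "f \<in> cArr R \<Longrightarrow> LM f \<in> cArr A"
  using LM_hom by (simp add: hom_def)
lemma dc_R: "f \<in> cArr R \<Longrightarrow> cDom R f \<in> cObj R" "f \<in> cArr R \<Longrightarrow> cCod R f \<in> cObj R"
  using catR by (auto simp: category_def)

lemma FMe_hom: "f \<in> cArr R \<Longrightarrow> FM (up_e A E M (LM f)) \<in> hom C (FO (LO (cDom R f))) (FO (tgt A E M (LM f)))"
  using FM_up_e[OF F LM_arr] LM_hom by (simp add: hom_def)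
lemma FMm_hom: "f \<in> cArr R \<Longrightarrow> FM (up_m A E M (LM f)) \<in> hom C (FO (LO (cCod R f))) (FO (tgt A E M (LM f)))"
  using FM_up_m[OF F LM_arr] LM_hom by (simp add: hom_def)

lemma pi_hom: "x \<in> cObj R \<Longrightarrow> \<pi> x \<in> hom C P (FO (LO x))"
  using prodP by (simp add: is_product_def)
lemma rho_hom: "f \<in> cArr R \<Longrightarrow> \<rho> f \<in> hom C Q (FO (tgt A E M (LM f)))"
  using prodQ by (simp add: is_product_def)
lemma P_obj: "P \<in> cObj C" using prodP by (simp add: is_product_def)

lemma key:
  assumes c: "c \<in> cObj C" and e: "e \<in> hom C c P"
  shows "is_wedge A E M C FO FM R LO LM c (\<lambda>x. cComp C (\<pi> x) e) \<longleftrightarrow> cComp C s e = cComp C t e"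
proof -
  have es: "cComp C (FM (up_e A E M (LM f))) (cComp C (\<pi> (cDom R f)) e) = cComp C (\<rho> f) (cComp C s e)"
    if f: "f \<in> cArr R" for f
  proof -
    have "cComp C (FM (up_e A E M (LM f))) (cComp C (\<pi> (cDom R f)) e)
        = cComp C (cComp C (FM (up_e A E M (LM f))) (\<pi> (cDom R f))) e"
      by (rule cat_assoc[OF catC e pi_hom[OF dc_R(1)[OF f]] FMe_hom[OF f]])
    also have "\<dots> = cComp C (cComp C (\<rho> f) s) e" using s_comp f by simp
    also have "\<dots> = cComp C (\<rho> f) (cComp C s e)"
      by (rule cat_assoc[OF catC e s rho_hom[OF f], symmetric])
    finally show ?thesis .
  qed
  have et: "cComp C (FM (up_m A E M (LM f))) (cComp C (\<pi> (cCod R f)) e) = cComp C (\<rho> f) (cComp C t e)"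
    if f: "f \<in> cArr R" for f
  proof -
    have "cComp C (FM (up_m A E M (LM f))) (cComp C (\<pi> (cCod R f)) e)
        = cComp C (cComp C (FM (up_m A E M (LM f))) (\<pi> (cCod R f))) e"
      by (rule cat_assoc[OF catC e pi_hom[OF dc_R(2)[OF f]] FMm_hom[OF f]])
    also have "\<dots> = cComp C (cComp C (\<rho> f) t) e" using t_comp f by simp
    also have "\<dots> = cComp C (\<rho> f) (cComp C t e)"
      by (rule cat_assoc[OF catC e t rho_hom[OF f], symmetric])
    finally show ?thesis .
  qed
  have homs: "\<forall>x\<in>cObj R. cComp C (\<pi> x) e \<in> hom C c (FO (LO x))"
    using cat_comp_hom[OF catC e pi_hom] by blast
  have "is_wedge A E M C FO FM R LO LM c (\<lambda>x. cComp C (\<pi> x) e) \<longleftrightarrow>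
        (\<forall>f\<in>cArr R. cComp C (\<rho> f) (cComp C s e) = cComp C (\<rho> f) (cComp C t e))"
    unfolding is_wedge_def using c homs es et by simp
  also have "\<dots> \<longleftrightarrow> cComp C s e = cComp C t e"
  proof
    assume "\<forall>f\<in>cArr R. cComp C (\<rho> f) (cComp C s e) = cComp C (\<rho> f) (cComp C t e)"
    then show "cComp C s e = cComp C t e"
      by (rule prod_unique[OF catC prodQ cat_comp_hom[OF catC e s] cat_comp_hom[OF catC e t]])
  qed simp
  finally show ?thesis .
qed

lemma wedge_cong:
  assumes "\<forall>x\<in>cObj R. \<eta> x = \<eta>' x"
  shows "is_wedge A E M C FO FM R LO LM c \<eta> \<longleftrightarrow> is_wedge A E M C FO FM R LO LM c \<eta>'"
  using assms dc_R unfolding is_wedge_def by simp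

lemma wedge_tuple:
  assumes w: "is_wedge A E M C FO FM R LO LM c \<eta>"
  shows "tuple C (cObj R) P \<pi> c \<eta> \<in> hom C c P"
    "\<forall>x\<in>cObj R. cComp C (\<pi> x) (tuple C (cObj R) P \<pi> c \<eta>) = \<eta> x"
    "cComp C s (tuple C (cObj R) P \<pi> c \<eta>) = cComp C t (tuple C (cObj R) P \<pi> c \<eta>)"
proof -
  have c: "c \<in> cObj C" and h: "\<forall>x\<in>cObj R. \<eta> x \<in> hom C c (FO (LO x))"
    using w by (auto simp: is_wedge_def)
  note tp = tuple_prop[OF prodP c h]
  show "tuple C (cObj R) P \<pi> c \<eta> \<in> hom C c P"
    "\<forall>x\<in>cObj R. cComp C (\<pi> x) (tuple C (cObj R) P \<pi> c \<eta>) = \<eta> x" using tp by auto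
  have "is_wedge A E M C FO FM R LO LM c (\<lambda>x. cComp C (\<pi> x) (tuple C (cObj R) P \<pi> c \<eta>))"
    using wedge_cong[of "\<lambda>x. cComp C (\<pi> x) (tuple C (cObj R) P \<pi> c \<eta>)" \<eta>] tp w by simp
  then show "cComp C s (tuple C (cObj R) P \<pi> c \<eta>) = cComp C t (tuple C (cObj R) P \<pi> c \<eta>)"
    using key[OF c] tp by blast
qed

lemma tuple_comp_iff:
  assumes w: "is_wedge A E M C FO FM R LO LM c \<eta>" and h: "h \<in> hom C d c" and e': "e' \<in> hom C d P"
  shows "cComp C (tuple C (cObj R) P \<pi> c \<eta>) h = e' \<longleftrightarrow> (\<forall>x\<in>cObj R. cComp C (\<eta> x) h = cComp C (\<pi> x) e')"
proof -
  note wt = wedge_tuple[OF w]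
  have a: "cComp C (\<pi> x) (cComp C (tuple C (cObj R) P \<pi> c \<eta>) h) = cComp C (\<eta> x) h" if x: "x \<in> cObj R" for x
    using cat_assoc[OF catC h wt(1) pi_hom[OF x]] wt(2) x by simp
  show ?thesis
  proof
    assume "cComp C (tuple C (cObj R) P \<pi> c \<eta>) h = e'"
    then show "\<forall>x\<in>cObj R. cComp C (\<eta> x) h = cComp C (\<pi> x) e'" using a by simp
  next
    assume "\<forall>x\<in>cObj R. cComp C (\<eta> x) h = cComp C (\<pi> x) e'"
    then show "cComp C (tuple C (cObj R) P \<pi> c \<eta>) h = e'"
      using a by (intro prod_unique[OF catC prodP cat_comp_hom[OF catC h wt(1)] e']) simp
  qed
qed

lemma end_eq:
  assumes en: "is_end A E M C FO FM R LO LM c \<eta>"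
  shows "is_equalizer C P s t c (tuple C (cObj R) P \<pi> c \<eta>)"
proof -
  have w: "is_wedge A E M C FO FM R LO LM c \<eta>" using en by (simp add: is_end_def)
  note wt = wedge_tuple[OF w]
  have c: "c \<in> cObj C" using w by (simp add: is_wedge_def)
  have univ: "\<exists>!h. h \<in> hom C d c \<and> cComp C (tuple C (cObj R) P \<pi> c \<eta>) h = e'"
    if d: "d \<in> cObj C" and e': "e' \<in> hom C d P" and se: "cComp C s e' = cComp C t e'" for d e'
  proof -
    have wd: "is_wedge A E M C FO FM R LO LM d (\<lambda>x. cComp C (\<pi> x) e')" using key[OF d e'] se by simp
    have "\<exists>!h. h \<in> hom C d c \<and> (\<forall>x\<in>cObj R. cComp C (\<eta> x) h = cComp C (\<pi> x) e')"
      using en wd unfolding is_end_def by blast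
    then show ?thesis using tuple_comp_iff[OF w _ e'] by (metis (no_types, lifting))
  qed
  show ?thesis unfolding is_equalizer_def using c wt univ by blast
qed

lemma eq_end:
  assumes eq: "is_equalizer C P s t c e"
  shows "is_end A E M C FO FM R LO LM c (\<lambda>x. cComp C (\<pi> x) e)"
proof -
  have c: "c \<in> cObj C" and e: "e \<in> hom C c P" and se: "cComp C s e = cComp C t e"
    using eq by (auto simp: is_equalizer_def)
  have w: "is_wedge A E M C FO FM R LO LM c (\<lambda>x. cComp C (\<pi> x) e)" using key[OF c e] se by simp
  have univ: "\<exists>!h. h \<in> hom C d c \<and> (\<forall>x\<in>cObj R. cComp C (cComp C (\<pi> x) e) h = \<theta> x)"
    if wd: "is_wedge A E M C FO FM R LO LM d \<theta>" for d \<theta>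
  proof -
    note wt = wedge_tuple[OF wd]
    have d: "d \<in> cObj C" and th: "\<forall>x\<in>cObj R. \<theta> x \<in> hom C d (FO (LO x))"
      using wd by (auto simp: is_wedge_def)
    have ex: "\<exists>!h. h \<in> hom C d c \<and> cComp C e h = tuple C (cObj R) P \<pi> d \<theta>"
      using eq d wt(1,3) unfolding is_equalizer_def by blast
    have iff: "cComp C e h = tuple C (cObj R) P \<pi> d \<theta> \<longleftrightarrow> (\<forall>x\<in>cObj R. cComp C (cComp C (\<pi> x) e) h = \<theta> x)"
      if h: "h \<in> hom C d c" for h
    proof -
      have a: "cComp C (cComp C (\<pi> x) e) h = cComp C (\<pi> x) (cComp C e h)" if x: "x \<in> cObj R" for x
        using cat_assoc[OF catC h e pi_hom[OF x]] by simp
      show ?thesis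
      proof
        assume "cComp C e h = tuple C (cObj R) P \<pi> d \<theta>"
        then show "\<forall>x\<in>cObj R. cComp C (cComp C (\<pi> x) e) h = \<theta> x" using a wt(2) by simp
      next
        assume "\<forall>x\<in>cObj R. cComp C (cComp C (\<pi> x) e) h = \<theta> x"
        then show "cComp C e h = tuple C (cObj R) P \<pi> d \<theta>"
          using a by (intro tuple_eq[OF prodP d th cat_comp_hom[OF catC h e], symmetric]) simp
      qed
    qed
    show ?thesis using ex iff by (metis (no_types, lifting))
  qed
  show ?thesis unfolding is_end_def using w univ by blast
qed

abbreviation "WC \<equiv> wedge_cat A E M C FO FM R LO LM"
abbreviation "KC \<equiv> cone_cat C P s t"
abbreviation "isW w \<equiv> is_wedge A E M C FO FM R LO LM (fst w) (snd w) \<and> snd w \<in> extensional (cObj R)"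
abbreviation "isK u \<equiv> fst u \<in> cObj C \<and> snd u \<in> hom C (fst u) P \<and> cComp C s (snd u) = cComp C t (snd u)"

lemma WC_simps:
  "cObj WC = {w. isW w}"
  "cArr WC = {(u, v, h). isW u \<and> isW v \<and> h \<in> hom C (fst u) (fst v) \<and>
                          (\<forall>x\<in>cObj R. cComp C (snd v x) h = snd u x)}"
  "cDom WC = (\<lambda>(u, v, h). u)" "cCod WC = (\<lambda>(u, v, h). v)"
  "cId WC = (\<lambda>u. (u, u, cId C (fst u)))"
  "cComp WC = (\<lambda>(v', w, k) (u, v, h). (u, w, cComp C k h))"
  by (simp_all add: wedge_cat_def Let_def)

lemma KC_simps:
  "cObj KC = {u. isK u}"
  "cArr KC = {(u, v, h). isK u \<and> isK v \<and> h \<in> hom C (fst u) (fst v) \<and> cComp C (snd v) h = snd u}"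
  "cDom KC = (\<lambda>(u, v, h). u)" "cCod KC = (\<lambda>(u, v, h). v)"
  "cId KC = (\<lambda>u. (u, u, cId C (fst u)))"
  "cComp KC = (\<lambda>(v', w, k) (u, v, h). (u, w, cComp C k h))"
  by (simp_all add: cone_cat_def Let_def)

lemma wfacts: "is_wedge A E M C FO FM R LO LM c \<eta> \<Longrightarrow> c \<in> cObj C"
   "is_wedge A E M C FO FM R LO LM c \<eta> \<Longrightarrow> x \<in> cObj R \<Longrightarrow> \<eta> x \<in> hom C c (FO (LO x))"
  by (auto simp: is_wedge_def)

lemma cat_WC: "category WC"
  unfolding category_def
proof (intro conjI ballI impI allI)
  fix f assume "f \<in> cArr WC" then show "cDom WC f \<in> cObj WC"
    by (auto simp: WC_simps)
next
  fix f assume "f \<in> cArr WC" then show "cCod WC f \<in> cObj WC"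
    by (auto simp: WC_simps)
next
  fix u assume u: "u \<in> cObj WC"
  then have c: "fst u \<in> cObj C" using wfacts by (auto simp: WC_simps)
  show "cId WC u \<in> hom WC u u"
    using u c cat_id_hom[OF catC c] cat_id_r[OF catC wfacts(2)] by (auto simp: WC_simps hom_def)
next
  fix f g assume f: "f \<in> cArr WC" and g: "g \<in> cArr WC" and fg: "cCod WC f = cDom WC g"
  obtain u v h where fe: "f = (u, v, h)" by (cases f) auto
  obtain w k where ge: "g = (v, w, k)" using fg fe by (cases g) (auto simp: WC_simps)
  have h: "h \<in> hom C (fst u) (fst v)" and k: "k \<in> hom C (fst v) (fst w)" and wW: "isW w"
    and hc: "\<forall>x\<in>cObj R. cComp C (snd v x) h = snd u x" and kc: "\<forall>x\<in>cObj R. cComp C (snd w x) k = snd v x"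
    using f g fe ge by (auto simp: WC_simps)
  have "\<forall>x\<in>cObj R. cComp C (snd w x) (cComp C k h) = snd u x"
    using cat_assoc[OF catC h k wfacts(2)[OF conjunct1[OF wW]]] hc kc by simp
  then show "cComp WC g f \<in> hom WC (cDom WC f) (cCod WC g)"
    using f g fe ge cat_comp_hom[OF catC h k] by (auto simp: WC_simps hom_def)
next
  fix f assume f: "f \<in> cArr WC"
  obtain u v h where fe: "f = (u, v, h)" by (cases f) auto
  have h: "h \<in> hom C (fst u) (fst v)" using f fe by (auto simp: WC_simps)
  show "cComp WC f (cId WC (cDom WC f)) = f"
    using fe cat_id_l[OF catC h] cat_id_r[OF catC h] by (simp add: WC_simps)
next
  fix f assume f: "f \<in> cArr WC"
  obtain u v h where fe: "f = (u, v, h)" by (cases f) auto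
  have h: "h \<in> hom C (fst u) (fst v)" using f fe by (auto simp: WC_simps)
  show "cComp WC (cId WC (cCod WC f)) f = f"
    using fe cat_id_l[OF catC h] cat_id_r[OF catC h] by (simp add: WC_simps)
next
  fix f g h' assume f: "f \<in> cArr WC" and g: "g \<in> cArr WC" and hh: "h' \<in> cArr WC"
    and fg: "cCod WC f = cDom WC g" and gh: "cCod WC g = cDom WC h'"
  obtain u v h where fe: "f = (u, v, h)" by (cases f) auto
  obtain w k where ge: "g = (v, w, k)" using fg fe by (cases g) (auto simp: WC_simps)
  obtain z l where he: "h' = (w, z, l)" using gh ge by (cases h') (auto simp: WC_simps)
  have h: "h \<in> hom C (fst u) (fst v)" and k: "k \<in> hom C (fst v) (fst w)" and l: "l \<in> hom C (fst w) (fst z)"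
    using f g hh fe ge he by (auto simp: WC_simps)
  show "cComp WC h' (cComp WC g f) = cComp WC (cComp WC h' g) f"
    using fe ge he cat_assoc[OF catC h k l] by (simp add: WC_simps)
qed

lemma cat_KC: "category KC"
  unfolding category_def
proof (intro conjI ballI impI allI)
  fix f assume "f \<in> cArr KC" then show "cDom KC f \<in> cObj KC"
    by (auto simp: KC_simps)
next
  fix f assume "f \<in> cArr KC" then show "cCod KC f \<in> cObj KC"
    by (auto simp: KC_simps)
next
  fix u assume u: "u \<in> cObj KC"
  then have c: "fst u \<in> cObj C" and e: "snd u \<in> hom C (fst u) P" by (auto simp: KC_simps)
  show "cId KC u \<in> hom KC u u"
    using u c cat_id_hom[OF catC c] cat_id_r[OF catC e] by (auto simp: KC_simps hom_def)
next
  fix f g assume f: "f \<in> cArr KC" and g: "g \<in> cArr KC" and fg: "cCod KC f = cDom KC g"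
  obtain u v h where fe: "f = (u, v, h)" by (cases f) auto
  obtain w k where ge: "g = (v, w, k)" using fg fe by (cases g) (auto simp: KC_simps)
  have h: "h \<in> hom C (fst u) (fst v)" and k: "k \<in> hom C (fst v) (fst w)" and wW: "snd w \<in> hom C (fst w) P"
    and hc: "cComp C (snd v) h = snd u" and kc: "cComp C (snd w) k = snd v"
    using f g fe ge by (auto simp: KC_simps)
  have "cComp C (snd w) (cComp C k h) = snd u"
    using cat_assoc[OF catC h k wW] hc kc by simp
  then show "cComp KC g f \<in> hom KC (cDom KC f) (cCod KC g)"
    using f g fe ge cat_comp_hom[OF catC h k] by (auto simp: KC_simps hom_def)
next
  fix f assume f: "f \<in> cArr KC"
  obtain u v h where fe: "f = (u, v, h)" by (cases f) auto
  have h: "h \<in> hom C (fst u) (fst v)" using f fe by (auto simp: KC_simps)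
  show "cComp KC f (cId KC (cDom KC f)) = f"
    using fe cat_id_l[OF catC h] cat_id_r[OF catC h] by (simp add: KC_simps)
next
  fix f assume f: "f \<in> cArr KC"
  obtain u v h where fe: "f = (u, v, h)" by (cases f) auto
  have h: "h \<in> hom C (fst u) (fst v)" using f fe by (auto simp: KC_simps)
  show "cComp KC (cId KC (cCod KC f)) f = f"
    using fe cat_id_l[OF catC h] cat_id_r[OF catC h] by (simp add: KC_simps)
next
  fix f g h' assume f: "f \<in> cArr KC" and g: "g \<in> cArr KC" and hh: "h' \<in> cArr KC"
    and fg: "cCod KC f = cDom KC g" and gh: "cCod KC g = cDom KC h'"
  obtain u v h where fe: "f = (u, v, h)" by (cases f) auto
  obtain w k where ge: "g = (v, w, k)" using fg fe by (cases g) (auto simp: KC_simps)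
  obtain z l where he: "h' = (w, z, l)" using gh ge by (cases h') (auto simp: KC_simps)
  have h: "h \<in> hom C (fst u) (fst v)" and k: "k \<in> hom C (fst v) (fst w)" and l: "l \<in> hom C (fst w) (fst z)"
    using f g hh fe ge he by (auto simp: KC_simps)
  show "cComp KC h' (cComp KC g f) = cComp KC (cComp KC h' g) f"
    using fe ge he cat_assoc[OF catC h k l] by (simp add: KC_simps)
qed

abbreviation "T c \<eta> \<equiv> tuple C (cObj R) P \<pi> c \<eta>"
definition "FOb = (\<lambda>(c, \<eta>). (c, T c \<eta>))"
definition "FMa = (\<lambda>(u, v, h). ((fst u, T (fst u) (snd u)), (fst v, T (fst v) (snd v)), h))"

lemma FOb_eq: "FOb u = (fst u, T (fst u) (snd u))" by (cases u) (simp add: FOb_def)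
lemma FMa_eq: "FMa (u, v, h) = (FOb u, FOb v, h)" by (simp add: FMa_def FOb_eq)

lemma fst_FOb[simp]: "fst (FOb u) = fst u" by (simp add: FOb_eq)
lemma snd_FOb[simp]: "snd (FOb u) = T (fst u) (snd u)" by (simp add: FOb_eq)

lemma FOb_K: assumes "isW u" shows "isK (FOb u)"
  using wedge_tuple[OF conjunct1[OF assms]] wfacts(1)[OF conjunct1[OF assms]] by simp

lemma FOb_inj: assumes "isW u" "isW u'" "FOb u = FOb u'" shows "u = u'"
proof -
  have f: "fst u = fst u'" using assms(3) by (simp add: FOb_eq)
  have tt: "T (fst u) (snd u) = T (fst u') (snd u')" by (metis assms(3) snd_FOb)
  have "\<forall>x\<in>cObj R. snd u x = snd u' x"
    using wedge_tuple(2)[of "fst u" "snd u"] wedge_tuple(2)[of "fst u'" "snd u'"] assms(1,2) tt by metis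
  then have "snd u = snd u'" using assms(1,2) by (intro extensionalityI) auto
  then show ?thesis using f by (simp add: prod_eq_iff)
qed

definition "pre k = (fst k, restrict (\<lambda>x. cComp C (\<pi> x) (snd k)) (cObj R))"

lemma pre_W: assumes "isK k" shows "isW (pre k)" "FOb (pre k) = k"
proof -
  have c: "fst k \<in> cObj C" and e: "snd k \<in> hom C (fst k) P" and se: "cComp C s (snd k) = cComp C t (snd k)"
    using assms by auto
  have "is_wedge A E M C FO FM R LO LM (fst k) (\<lambda>x. cComp C (\<pi> x) (snd k))" using key[OF c e] se by simp
  then show "isW (pre k)" using wedge_cong[of "restrict (\<lambda>x. cComp C (\<pi> x) (snd k)) (cObj R)" "\<lambda>x. cComp C (\<pi> x) (snd k)"]
    by (simp add: pre_def)
  have "T (fst k) (restrict (\<lambda>x. cComp C (\<pi> x) (snd k)) (cObj R)) = snd k"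
    by (rule tuple_eq[OF prodP c _ e]) (use cat_comp_hom[OF catC e pi_hom] in auto)
  then show "FOb (pre k) = k" by (simp add: FOb_eq pre_def)
qed

lemma FMa_arr: assumes a: "(u, v, h) \<in> cArr WC" shows "(FOb u, FOb v, h) \<in> cArr KC"
proof -
  have u: "isW u" and v: "isW v" and h: "h \<in> hom C (fst u) (fst v)"
    and hc: "\<forall>x\<in>cObj R. cComp C (snd v x) h = snd u x" using a by (auto simp: WC_simps)
  note wu = wedge_tuple[of "fst u" "snd u"] and wv = wedge_tuple[of "fst v" "snd v"]
  have "cComp C (T (fst v) (snd v)) h = T (fst u) (snd u)"
    using tuple_comp_iff[OF conjunct1[OF v] h wu(1)[OF conjunct1[OF u]]] hc wu(2)[OF conjunct1[OF u]] by simp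
  then show ?thesis using FOb_K[OF u] FOb_K[OF v] h by (simp add: KC_simps)
qed

lemma FMa_surj: assumes a: "(k1, k2, h) \<in> cArr KC" shows "(pre k1, pre k2, h) \<in> cArr WC"
proof -
  have k1: "isK k1" and k2: "isK k2" and h: "h \<in> hom C (fst k1) (fst k2)" and hc: "cComp C (snd k2) h = snd k1"
    using a by (auto simp: KC_simps)
  note p1 = pre_W[OF k1] and p2 = pre_W[OF k2]
  have f1: "fst (pre k1) = fst k1" and f2: "fst (pre k2) = fst k2" by (simp_all add: pre_def)
  have t2: "T (fst (pre k2)) (snd (pre k2)) = snd k2" and t1: "T (fst (pre k1)) (snd (pre k1)) = snd k1"
    using p1(2) p2(2) snd_FOb by metis+
  have "\<forall>x\<in>cObj R. cComp C (snd (pre k2) x) h = cComp C (\<pi> x) (snd k1)"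
    using tuple_comp_iff[OF conjunct1[OF p2(1)], of h "fst k1" "snd k1"] h k1 hc t2 f2 by simp
  then have "\<forall>x\<in>cObj R. cComp C (snd (pre k2) x) h = snd (pre k1) x" by (simp add: pre_def)
  then show ?thesis using p1(1) p2(1) h f1 f2 by (simp add: WC_simps)
qed

lemma iso: "iso_functor WC KC FOb FMa"
  unfolding iso_functor_def cfunctor_def
proof (intro conjI)
  show "category WC" by (rule cat_WC)
  show "category KC" by (rule cat_KC)
  show "\<forall>x\<in>cObj WC. FOb x \<in> cObj KC" using FOb_K by (simp add: WC_simps KC_simps)
  show "\<forall>f\<in>cArr WC. FMa f \<in> hom KC (FOb (cDom WC f)) (FOb (cCod WC f))"
  proof
    fix f assume f: "f \<in> cArr WC"
    obtain u v h where fe: "f = (u, v, h)" by (cases f) auto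
    show "FMa f \<in> hom KC (FOb (cDom WC f)) (FOb (cCod WC f))"
    proof -
      have "FMa f \<in> cArr KC" using FMa_arr f fe by (simp add: FMa_eq)
      then show ?thesis unfolding hom_def using fe by (simp add: FMa_eq KC_simps(3,4) WC_simps(3,4))
    qed
  qed
  show "\<forall>x\<in>cObj WC. FMa (cId WC x) = cId KC (FOb x)"
    by (simp add: WC_simps KC_simps FMa_eq FOb_eq)
  show "\<forall>f\<in>cArr WC. \<forall>g\<in>cArr WC. cCod WC f = cDom WC g \<longrightarrow> FMa (cComp WC g f) = cComp KC (FMa g) (FMa f)"
  proof (intro ballI impI)
    fix f g assume f: "f \<in> cArr WC" and g: "g \<in> cArr WC" and fg: "cCod WC f = cDom WC g"
    obtain u v h where fe: "f = (u, v, h)" by (cases f) auto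
    obtain w k where ge: "g = (v, w, k)" using fg fe by (cases g) (auto simp: WC_simps)
    show "FMa (cComp WC g f) = cComp KC (FMa g) (FMa f)"
      using fe ge by (simp add: WC_simps KC_simps FMa_eq)
  qed
  show "bij_betw FOb (cObj WC) (cObj KC)"
    unfolding bij_betw_def
  proof
    show "inj_on FOb (cObj WC)" using FOb_inj by (auto simp: WC_simps inj_on_def)
    show "FOb ` cObj WC = cObj KC"
    proof
      show "FOb ` cObj WC \<subseteq> cObj KC" using FOb_K by (auto simp: WC_simps KC_simps)
      show "cObj KC \<subseteq> FOb ` cObj WC"
      proof
        fix k assume "k \<in> cObj KC" then have k: "isK k" by (simp add: KC_simps)
        show "k \<in> FOb ` cObj WC" using pre_W[OF k] by (metis (mono_tags, lifting) WC_simps(1) image_eqI mem_Collect_eq)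
      qed
    qed
  qed
  show "bij_betw FMa (cArr WC) (cArr KC)"
    unfolding bij_betw_def
  proof
    show "inj_on FMa (cArr WC)"
    proof (rule inj_onI)
      fix a b assume a: "a \<in> cArr WC" and b: "b \<in> cArr WC" and ab: "FMa a = FMa b"
      obtain u v h where ae: "a = (u, v, h)" by (cases a) auto
      obtain u' v' h' where be: "b = (u', v', h')" by (cases b) auto
      have "isW u" "isW v" "isW u'" "isW v'" using a b ae be by (auto simp: WC_simps)
      then show "a = b" using ab ae be FOb_inj by (simp add: FMa_eq)
    qed
    show "FMa ` cArr WC = cArr KC"
    proof
      show "FMa ` cArr WC \<subseteq> cArr KC"
      proof
        fix y assume "y \<in> FMa ` cArr WC"
        then obtain a where a: "a \<in> cArr WC" and y: "y = FMa a" by blast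
        obtain u v h where ae: "a = (u, v, h)" by (cases a) auto
        show "y \<in> cArr KC" using FMa_arr a ae y by (simp add: FMa_eq)
      qed
      show "cArr KC \<subseteq> FMa ` cArr WC"
      proof
        fix y assume y: "y \<in> cArr KC"
        obtain k1 k2 h where ye: "y = (k1, k2, h)" by (cases y) auto
        have "isK k1" "isK k2" using y ye by (auto simp: KC_simps)
        then have "FMa (pre k1, pre k2, h) = y" using pre_W ye by (simp add: FMa_eq)
        then show "y \<in> FMa ` cArr WC" using FMa_surj y ye by (metis image_eqI)
      qed
    qed
  qed
qed

lemma main:
  "iso_functor (wedge_cat A E M C FO FM R LO LM) (cone_cat C P s t)
        (\<lambda>(c, \<eta>). (c, tuple C (cObj R) P \<pi> c \<eta>))
        (\<lambda>(u, v, h). ((fst u, tuple C (cObj R) P \<pi> (fst u) (snd u)),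
                      (fst v, tuple C (cObj R) P \<pi> (fst v) (snd v)), h))
     \<and> ((\<exists>c \<eta>. is_end A E M C FO FM R LO LM c \<eta>) \<longleftrightarrow> (\<exists>c e. is_equalizer C P s t c e))
     \<and> (\<forall>c \<eta>. is_end A E M C FO FM R LO LM c \<eta> \<longrightarrow>
           is_equalizer C P s t c (tuple C (cObj R) P \<pi> c \<eta>))
     \<and> (\<forall>c e. is_equalizer C P s t c e \<longrightarrow>
           is_end A E M C FO FM R LO LM c (\<lambda>x. cComp C (\<pi> x) e))"
  using iso[unfolded FOb_def FMa_def] end_eq eq_end by blast

end

theorem mainTheorem4:
  fixes A :: "('a, 'f) cat" and E M :: "'f set"
    and C :: "('c, 'g) cat" and FO :: "'a \<Rightarrow> 'c" and FM :: "'f \<Rightarrow> 'g"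
    and R :: "('r, 'h) cat" and LO :: "'r \<Rightarrow> 'a" and LM :: "'h \<Rightarrow> 'f"
    and P Q :: 'c and \<pi> :: "'r \<Rightarrow> 'g" and \<rho> :: "'h \<Rightarrow> 'g" and s t :: 'g
  assumes F: "var_functor A E M C FO FM"
    and L: "cfunctor R A LO LM"
    and prodP: "is_product C (cObj R) P \<pi> (\<lambda>x. FO (LO x))"
    and prodQ: "is_product C (cArr R) Q \<rho> (\<lambda>f. FO (tgt A E M (LM f)))"
    and s: "s \<in> hom C P Q" and t: "t \<in> hom C P Q"
    and s_comp: "\<forall>f\<in>cArr R. cComp C (\<rho> f) s = cComp C (FM (up_e A E M (LM f))) (\<pi> (cDom R f))"
    and t_comp: "\<forall>f\<in>cArr R. cComp C (\<rho> f) t = cComp C (FM (up_m A E M (LM f))) (\<pi> (cCod R f))"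
  shows
    "iso_functor (wedge_cat A E M C FO FM R LO LM) (cone_cat C P s t)
        (\<lambda>(c, \<eta>). (c, tuple C (cObj R) P \<pi> c \<eta>))
        (\<lambda>(u, v, h). ((fst u, tuple C (cObj R) P \<pi> (fst u) (snd u)),
                      (fst v, tuple C (cObj R) P \<pi> (fst v) (snd v)), h))
     \<and> ((\<exists>c \<eta>. is_end A E M C FO FM R LO LM c \<eta>) \<longleftrightarrow> (\<exists>c e. is_equalizer C P s t c e))
     \<and> (\<forall>c \<eta>. is_end A E M C FO FM R LO LM c \<eta> \<longrightarrow>
           is_equalizer C P s t c (tuple C (cObj R) P \<pi> c \<eta>))
     \<and> (\<forall>c e. is_equalizer C P s t c e \<longrightarrow>
           is_end A E M C FO FM R LO LM c (\<lambda>x. cComp C (\<pi> x) e))"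
proof -
  interpret mt A E M C FO FM R LO LM P Q \<pi> \<rho> s t
    by (unfold_locales; fact)
  show ?thesis by (rule main)
qed

end
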